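(* Let $n\ge 3$. If $\mu$ is a symmetric measure on $L_n$ such that $C_\mu=C_{L_n}$, then $M_1(\mu)=C^0_\mu=C_{L_n}$.
   Context: $L_n$ is the path graph with vertices $\{1,\dots,n\}$ and edges $\{j,j+1\}$, with distance $|i-j|$. A measure on $L_n$ is a weight function $\mu:\{1,\dots,n\}\to(0,\infty)$, $\mu(A)=\sum_{v\in A}\mu(v)$; it is symmetric if $\mu(j)=\mu(n+1-j)$ for all $j$. Closed balls: $B(x,r)=\{y:|x-y|\le r\}$. $C_\mu=\sup\{\mu(B(x,2k+1))/\mu(B(x,k)):1\le x\le n,\ k\ge0\}$, $C_{L_n}=\inf_\mu C_\mu$, $C^0_\mu=\max_x\mu(B(x,1))/\mu(x)$, and $M_1(\mu)=\sup\{\mu(B(1,2k+1))/\mu(B(1,k)): k\in\mathbb Z,\ 0\le k<\lceil\frac{n-2}{3}\rceil\}$. *)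

theory Defs
  imports Complex_Main
begin

text \<open>Path graph L_n on vertices {1..n} with distance |i - j|.
  A measure is a weight function mu, required positive on {1..n}; values
  outside {1..n} are irrelevant.\<close>

definition pg_ball :: "nat \<Rightarrow> nat \<Rightarrow> nat \<Rightarrow> nat set" where
  "pg_ball n x r = {y \<in> {1..n}. \<bar>int x - int y\<bar> \<le> int r}"

definition pg_meas :: "(nat \<Rightarrow> real) \<Rightarrow> nat set \<Rightarrow> real" where
  "pg_meas mu A = (\<Sum>v\<in>A. mu v)"

definition pg_is_measure :: "nat \<Rightarrow> (nat \<Rightarrow> real) \<Rightarrow> bool" where
  "pg_is_measure n mu \<longleftrightarrow> (\<forall>v\<in>{1..n}. 0 < mu v)"

definition pg_symmetric :: "nat \<Rightarrow> (nat \<Rightarrow> real) \<Rightarrow> bool" where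
  "pg_symmetric n mu \<longleftrightarrow> (\<forall>j\<in>{1..n}. mu j = mu (n + 1 - j))"

definition C_mu :: "nat \<Rightarrow> (nat \<Rightarrow> real) \<Rightarrow> real" where
  "C_mu n mu = Sup {pg_meas mu (pg_ball n x (2*k+1)) / pg_meas mu (pg_ball n x k) | x k.
                     x \<in> {1..n}}"

definition C_L :: "nat \<Rightarrow> real" where
  "C_L n = Inf {C_mu n mu | mu. pg_is_measure n mu}"

definition C0_mu :: "nat \<Rightarrow> (nat \<Rightarrow> real) \<Rightarrow> real" where
  "C0_mu n mu = Max {pg_meas mu (pg_ball n x 1) / mu x | x. x \<in> {1..n}}"

definition M1 :: "nat \<Rightarrow> (nat \<Rightarrow> real) \<Rightarrow> real" where
  "M1 n mu = Sup {pg_meas mu (pg_ball n 1 (2*k+1)) / pg_meas mu (pg_ball n 1 k) | k.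
                   k < nat \<lceil>(real n - 2) / 3\<rceil>}"

end

theory Submission
  imports Defs
begin


lemma ball_ivl:
  assumes "1 \<le> x" "x \<le> n"
  shows "pg_ball n x r = {max 1 (x - r) .. min n (x + r)}"
  using assms unfolding pg_ball_def by (auto simp: max_def min_def split: if_splits)

lemma ball_sub: "pg_ball n x r \<subseteq> {1..n}"
  unfolding pg_ball_def by auto

lemma ball_fin: "finite (pg_ball n x r)"
  by (rule finite_subset[OF ball_sub]) simp

lemma ball_center: "1 \<le> x \<Longrightarrow> x \<le> n \<Longrightarrow> x \<in> pg_ball n x r"
  unfolding pg_ball_def by auto

lemma ball_mono: "r \<le> s \<Longrightarrow> pg_ball n x r \<subseteq> pg_ball n x s"
  unfolding pg_ball_def by auto

lemma ball0: "1 \<le> x \<Longrightarrow> x \<le> n \<Longrightarrow> pg_ball n x 0 = {x}"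
  unfolding pg_ball_def by auto

lemma ball_big: "1 \<le> x \<Longrightarrow> x \<le> n \<Longrightarrow> n \<le> r \<Longrightarrow> pg_ball n x r = {1..n}"
  unfolding pg_ball_def by auto

lemma meas_nonneg: "pg_is_measure n mu \<Longrightarrow> A \<subseteq> {1..n} \<Longrightarrow> 0 \<le> pg_meas mu A"
  unfolding pg_meas_def pg_is_measure_def
  by (rule sum_nonneg) (auto simp: less_imp_le)

lemma meas_pos: "pg_is_measure n mu \<Longrightarrow> A \<subseteq> {1..n} \<Longrightarrow> A \<noteq> {} \<Longrightarrow> 0 < pg_meas mu A"
  unfolding pg_meas_def pg_is_measure_def
  by (rule sum_pos) (auto intro: finite_subset)

lemma meas_mono: "pg_is_measure n mu \<Longrightarrow> A \<subseteq> B \<Longrightarrow> B \<subseteq> {1..n} \<Longrightarrow> pg_meas mu A \<le> pg_meas mu B"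
  unfolding pg_meas_def pg_is_measure_def
  by (rule sum_mono2) (auto intro: finite_subset less_imp_le)

lemma meas_strict_mono: "pg_is_measure n mu \<Longrightarrow> A \<subseteq> B \<Longrightarrow> B \<subseteq> {1..n} \<Longrightarrow> y \<in> B \<Longrightarrow> y \<notin> A
   \<Longrightarrow> pg_meas mu A < pg_meas mu B"
proof -
  assume m: "pg_is_measure n mu" and ab: "A \<subseteq> B" and b: "B \<subseteq> {1..n}" and y: "y \<in> B" "y \<notin> A"
  have fB: "finite B" using b by (rule finite_subset) simp
  have "pg_meas mu (insert y A) \<le> pg_meas mu B"
    using meas_mono[OF m _ b] ab y by auto
  moreover have "pg_meas mu (insert y A) = mu y + pg_meas mu A"
    unfolding pg_meas_def using y fB ab by (subst sum.insert) (auto intro: finite_subset)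
  moreover have "0 < mu y" using m y b unfolding pg_is_measure_def by auto
  ultimately show ?thesis by linarith
qed

lemma meas_lin: "finite A \<Longrightarrow> pg_meas (\<lambda>v. mu v + t * g v) A = pg_meas mu A + t * pg_meas g A"
  unfolding pg_meas_def by (simp add: sum.distrib sum_distrib_left)

lemma meas_union: "finite A \<Longrightarrow> finite B \<Longrightarrow> A \<inter> B = {} \<Longrightarrow> pg_meas mu (A \<union> B) = pg_meas mu A + pg_meas mu B"
  unfolding pg_meas_def by (simp add: sum.union_disjoint)

definition R :: "nat \<Rightarrow> (nat \<Rightarrow> real) \<Rightarrow> nat \<Rightarrow> nat \<Rightarrow> real" where
  "R n mu x k = pg_meas mu (pg_ball n x (2*k+1)) / pg_meas mu (pg_ball n x k)"

lemma R_big: "1 \<le> x \<Longrightarrow> x \<le> n \<Longrightarrow> n \<le> k \<Longrightarrow> R n mu x k = R n mu x n"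
  unfolding R_def by (simp add: ball_big)

lemma Cset_eq: "{pg_meas mu (pg_ball n x (2*k+1)) / pg_meas mu (pg_ball n x k) | x k. x \<in> {1..n}}
   = (\<lambda>(x,k). R n mu x k) ` ({1..n} \<times> {..n})"
proof (rule set_eqI, rule iffI)
  fix z assume "z \<in> {pg_meas mu (pg_ball n x (2*k+1)) / pg_meas mu (pg_ball n x k) | x k. x \<in> {1..n}}"
  then obtain x k where xk: "x \<in> {1..n}" "z = R n mu x k" unfolding R_def by auto
  show "z \<in> (\<lambda>(x,k). R n mu x k) ` ({1..n} \<times> {..n})"
  proof (cases "k \<le> n")
    case True then show ?thesis using xk by force
  next
    case False then have "z = R n mu x n" using xk R_big[of x n k mu] by auto
    then show ?thesis using xk by (auto intro!: image_eqI[where x="(x,n)"])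
  qed
next
  fix z assume "z \<in> (\<lambda>(x,k). R n mu x k) ` ({1..n} \<times> {..n})"
  then show "z \<in> {pg_meas mu (pg_ball n x (2*k+1)) / pg_meas mu (pg_ball n x k) | x k. x \<in> {1..n}}"
    unfolding R_def by auto
qed

lemma C_mu_Max: "1 \<le> n \<Longrightarrow> C_mu n mu = Max ((\<lambda>(x,k). R n mu x k) ` ({1..n} \<times> {..n}))"
  unfolding C_mu_def Cset_eq
  by (rule cSup_eq_Max) auto

lemma R_le_C: "1 \<le> n \<Longrightarrow> x \<in> {1..n} \<Longrightarrow> R n mu x k \<le> C_mu n mu"
proof -
  assume n: "1 \<le> n" and x: "x \<in> {1..n}"
  have "R n mu x (min k n) \<le> C_mu n mu"
    unfolding C_mu_Max[OF n] using x by (intro Max_ge) auto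
  moreover have "R n mu x (min k n) = R n mu x k"
    using x R_big[of x n k mu] by (cases "k \<le> n") (auto simp: min_def)
  ultimately show ?thesis by simp
qed

lemma C_lt: "1 \<le> n \<Longrightarrow> (\<And>x k. x \<in> {1..n} \<Longrightarrow> k \<le> n \<Longrightarrow> R n mu x k < D) \<Longrightarrow> C_mu n mu < D"
  by (subst C_mu_Max, simp) (subst Max_less_iff, auto)



lemma ball_ne: "1 \<le> x \<Longrightarrow> x \<le> n \<Longrightarrow> pg_ball n x r \<noteq> {}"
  using ball_center by blast

lemma meas_ball_pos: "pg_is_measure n mu \<Longrightarrow> 1 \<le> x \<Longrightarrow> x \<le> n \<Longrightarrow> 0 < pg_meas mu (pg_ball n x r)"
  by (rule meas_pos[OF _ ball_sub ball_ne])

lemma R_nonneg: "pg_is_measure n mu \<Longrightarrow> x \<in> {1..n} \<Longrightarrow> 0 \<le> R n mu x k"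
  unfolding R_def
  by (intro divide_nonneg_nonneg meas_nonneg[OF _ ball_sub]) auto

lemma R_lt: "pg_is_measure n mu \<Longrightarrow> x \<in> {1..n} \<Longrightarrow>
   pg_meas mu (pg_ball n x (2*k+1)) < D * pg_meas mu (pg_ball n x k) \<Longrightarrow> R n mu x k < D"
  unfolding R_def using meas_ball_pos[of n mu x k]
  by (simp add: pos_divide_less_eq)

lemma R_le_D: "pg_is_measure n mu \<Longrightarrow> x \<in> {1..n} \<Longrightarrow> R n mu x k \<le> D \<Longrightarrow>
   pg_meas mu (pg_ball n x (2*k+1)) \<le> D * pg_meas mu (pg_ball n x k)"
  unfolding R_def using meas_ball_pos[of n mu x k]
  by (simp add: pos_divide_le_eq)

lemma R_lt_D: "pg_is_measure n mu \<Longrightarrow> x \<in> {1..n} \<Longrightarrow> R n mu x k < D \<Longrightarrow>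
   pg_meas mu (pg_ball n x (2*k+1)) < D * pg_meas mu (pg_ball n x k)"
  unfolding R_def using meas_ball_pos[of n mu x k]
  by (simp add: pos_divide_less_eq)

lemma C_mu_nonneg: "1 \<le> n \<Longrightarrow> pg_is_measure n mu \<Longrightarrow> 0 \<le> C_mu n mu"
  using R_nonneg[of n mu 1 0] R_le_C[of n 1 mu 0] by auto

lemma CL_le: "1 \<le> n \<Longrightarrow> pg_is_measure n nu \<Longrightarrow> C_L n \<le> C_mu n nu"
  unfolding C_L_def
proof (rule cInf_lower)
  show "bdd_below {C_mu n mu |mu. pg_is_measure n mu}" if "1 \<le> n"
    by (rule bdd_belowI[where m=0]) (use that in \<open>auto intro: C_mu_nonneg\<close>)
qed auto

lemma card_ball: "1 \<le> x \<Longrightarrow> x \<le> n \<Longrightarrow> card (pg_ball n x r) = Suc (min n (x + r)) - max 1 (x - r)"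
  by (simp add: ball_ivl)

lemma meas_one: "finite A \<Longrightarrow> pg_meas (\<lambda>_. 1) A = real (card A)"
  unfolding pg_meas_def by simp

lemma card_B2_le: "1 \<le> x \<Longrightarrow> x \<le> n \<Longrightarrow>
  card (pg_ball n x (2*k+1)) \<le> 2 * card (pg_ball n x k) + 1"
  by (simp add: card_ball max_def min_def; arith)

lemma card_B2_end: "1 \<le> x \<Longrightarrow> x \<le> n \<Longrightarrow> x = 1 \<or> x = n \<Longrightarrow>
  card (pg_ball n x (2*k+1)) \<le> 2 * card (pg_ball n x k)"
  by (auto simp add: card_ball max_def min_def; arith)

lemma card_B1_mid: "2 \<le> x \<Longrightarrow> x + 1 \<le> n \<Longrightarrow> 1 \<le> k \<Longrightarrow> 3 \<le> card (pg_ball n x k)"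
  by (simp add: card_ball max_def min_def; arith)



lemma uniform_meas: "pg_is_measure n (\<lambda>_. 1)"
  unfolding pg_is_measure_def by simp

lemma uniform_C: "1 \<le> n \<Longrightarrow> C_mu n (\<lambda>_. 1) \<le> 3"
proof -
  assume n: "1 \<le> n"
  have "R n (\<lambda>_. 1) x k \<le> 3" if x: "x \<in> {1..n}" for x k
  proof -
    have c1: "1 \<le> card (pg_ball n x k)"
      using card_ball[of x n k] x by (simp add: max_def min_def; arith)
    have "card (pg_ball n x (2*k+1)) \<le> 2 * card (pg_ball n x k) + 1"
      using x card_B2_le by auto
    then have "real (card (pg_ball n x (2*k+1))) \<le> 3 * real (card (pg_ball n x k))"
      using c1 by linarith
    then show ?thesis unfolding R_def using c1
      by (simp add: meas_one ball_fin pos_divide_le_eq)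
  qed
  then show ?thesis unfolding C_mu_Max[OF n] using n by (subst Max_le_iff) auto
qed

lemma CL_le3: "1 \<le> n \<Longrightarrow> C_L n \<le> 3"
  using CL_le[OF _ uniform_meas] uniform_C by fastforce

lemma meas_single[simp]: "pg_meas mu {x} = mu x"
  unfolding pg_meas_def by simp

lemma sum12: "pg_meas mu {1..2} = mu 1 + mu 2"
proof -
  have "{1..2::nat} = {1,2}" by auto
  then show ?thesis unfolding pg_meas_def by simp
qed

lemma sum123: "pg_meas mu {1..3} = mu 1 + mu 2 + mu 3"
proof -
  have "{1..3::nat} = {1,2,3}" by auto
  then show ?thesis unfolding pg_meas_def by simp
qed

lemma C_gt: 
  assumes n: "3 \<le> n" and m: "pg_is_measure n mu"
  shows "7/3 < C_mu n mu"
proof -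
  define C where "C = C_mu n mu"
  have pos: "0 < mu 1" "0 < mu 2" "0 < mu 3" using m n unfolding pg_is_measure_def by auto
  have b1: "pg_ball n 1 1 = {1..2}" using n by (simp add: ball_ivl)
  have b2: "pg_ball n 2 1 = {1..3}" using n by (simp add: ball_ivl)
  have b3: "{2..3} \<subseteq> pg_ball n 3 1" using n by (simp add: ball_ivl)
  have "R n mu 1 0 \<le> C" "R n mu 2 0 \<le> C" "R n mu 3 0 \<le> C"
    unfolding C_def using n by (auto intro!: R_le_C)
  then have i1: "pg_meas mu (pg_ball n 1 1) \<le> C * pg_meas mu (pg_ball n 1 0)"
    and i2: "pg_meas mu (pg_ball n 2 1) \<le> C * pg_meas mu (pg_ball n 2 0)"
    and i3: "pg_meas mu (pg_ball n 3 1) \<le> C * pg_meas mu (pg_ball n 3 0)"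
    using R_le_D[OF m, of 1 0 C] R_le_D[OF m, of 2 0 C] R_le_D[OF m, of 3 0 C] n by auto
  have "pg_meas mu {2..3} \<le> pg_meas mu (pg_ball n 3 1)"
    by (rule meas_mono[OF m b3 ball_sub])
  moreover have "pg_meas mu {2..3} = mu 2 + mu 3"
  proof -
    have "{2..3::nat} = {2,3}" by auto
    then show ?thesis unfolding pg_meas_def by simp
  qed
  ultimately have e3: "mu 2 + mu 3 \<le> C * mu 3" using i3 n ball0[of 3 n] by simp
  have z1: "pg_ball n 1 0 = {1}" "pg_ball n 2 0 = {2}" using n by (auto simp: pg_ball_def)
  have e1: "mu 1 + mu 2 \<le> C * mu 1" using i1 unfolding b1 z1 sum12 meas_single .
  have e2: "mu 1 + mu 2 + mu 3 \<le> C * mu 2" using i2 unfolding b2 z1 sum123 meas_single .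
  show ?thesis
  proof (rule ccontr)
    assume "\<not> 7/3 < C_mu n mu"
    then have c: "C \<le> 7/3" unfolding C_def by simp
    have "mu 2 \<le> (C-1) * mu 1" using e1 by (simp add: algebra_simps)
    then have "0 < (C-1) * mu 1" using pos by linarith
    then have c1: "C - 1 > 0" using pos by (simp add: zero_less_mult_iff)
    have "2 * mu 2 \<le> (C - 1) * (mu 1 + mu 3)" using e1 e3 by (simp add: algebra_simps)
    also have "\<dots> \<le> (C - 1) * ((C - 1) * mu 2)"
      using e2 c1 by (intro mult_left_mono) (auto simp: algebra_simps)
    finally have "2 * mu 2 \<le> (C-1)*(C-1) * mu 2" by simp
    moreover have "(C-1)*(C-1) \<le> (4/3)*(4/3)" using c c1 by (intro mult_mono) auto
    then have "(C-1)*(C-1) * mu 2 \<le> (16/9) * mu 2" using pos by (intro mult_right_mono) auto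
    ultimately show False using pos by linarith
  qed
qed



lemma small_t: "finite I \<Longrightarrow> (\<forall>i\<in>I. 0 < s i) \<Longrightarrow> \<exists>t>0. \<forall>i\<in>I. t < (s i :: real)"
proof (cases "I = {}")
  case True then show ?thesis by (intro exI[of _ 1]) auto
next
  case False
  assume f: "finite I" and p: "\<forall>i\<in>I. 0 < s i"
  define m where "m = Min (s ` I)"
  have "m \<in> s ` I" unfolding m_def using f False by (intro Min_in) auto
  then have mp: "0 < m" using p by auto
  have "\<forall>i\<in>I. m \<le> s i" unfolding m_def using f by auto
  then show ?thesis using mp by (intro exI[of _ "m/2"]) auto
qed

lemma card_strict:
  assumes x: "1 \<le> x" "x \<le> n" and k: "1 \<le> k" and C: "7/3 < C"
  shows "real (card (pg_ball n x (2*k+1))) < C * real (card (pg_ball n x k))"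
proof -
  have c1: "1 \<le> card (pg_ball n x k)"
    using card_ball[of x n k] x by (simp add: max_def min_def; arith)
  show ?thesis
  proof (cases "x = 1 \<or> x = n")
    case True
    then have "card (pg_ball n x (2*k+1)) \<le> 2 * card (pg_ball n x k)"
      using card_B2_end x by auto
    then have "real (card (pg_ball n x (2*k+1))) \<le> 2 * real (card (pg_ball n x k))" by simp
    moreover have "2 * real (card (pg_ball n x k)) < C * real (card (pg_ball n x k))"
      using c1 C by (intro mult_strict_right_mono) auto
    ultimately show ?thesis by linarith
  next
    case False
    then have c3: "3 \<le> card (pg_ball n x k)" using x k by (intro card_B1_mid) auto
    have "card (pg_ball n x (2*k+1)) \<le> 2 * card (pg_ball n x k) + 1"
      using card_B2_le x by auto
    then have "3 * real (card (pg_ball n x (2*k+1))) \<le> 7 * real (card (pg_ball n x k))"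
      using c3 by linarith
    moreover have "7 * real (card (pg_ball n x k)) < 3 * (C * real (card (pg_ball n x k)))"
      using c3 C by (simp add: algebra_simps)
    ultimately show ?thesis by linarith
  qed
qed

lemma C0_set: "{pg_meas mu (pg_ball n x 1) / mu x | x. x \<in> {1..n}} = (\<lambda>x. R n mu x 0) ` {1..n}"
  unfolding R_def by (auto simp: ball0)

lemma C0_le: "1 \<le> n \<Longrightarrow> C0_mu n mu \<le> C_mu n mu"
  unfolding C0_mu_def C0_set by (subst Max_le_iff) (auto intro: R_le_C)

theorem partA:
  assumes n: "3 \<le> n" and m: "pg_is_measure n mu" and opt: "C_mu n mu = C_L n"
  shows "C0_mu n mu = C_mu n mu"
proof (rule ccontr)
  assume ne: "C0_mu n mu \<noteq> C_mu n mu"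
  define C where "C = C_mu n mu"
  have n1: "1 \<le> n" using n by simp
  have lt: "C0_mu n mu < C" using C0_le[OF n1, of mu] ne unfolding C_def by simp
  have Cgt: "7/3 < C" unfolding C_def by (rule C_gt[OF n m])
  have R0: "R n mu x 0 < C" if "x \<in> {1..n}" for x
  proof -
    have "R n mu x 0 \<le> C0_mu n mu"
      unfolding C0_mu_def C0_set using that by (intro Max_ge) auto
    then show ?thesis using lt by simp
  qed
  define s where "s x = (C * pg_meas mu (pg_ball n x 0) - pg_meas mu (pg_ball n x 1)) / 3" for x
  have sp: "\<forall>x\<in>{1..n}. 0 < s x"
    using R_lt_D[OF m _ R0] unfolding s_def by auto
  obtain t where t0: "0 < t" and ts: "\<forall>x\<in>{1..n}. t < s x"
    using small_t[OF _ sp] by auto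
  define nu where "nu v = mu v + t * 1" for v
  have nm: "pg_is_measure n nu" using m t0 unfolding pg_is_measure_def nu_def by auto
  have nuA: "pg_meas nu A = pg_meas mu A + t * real (card A)" if "finite A" for A
    unfolding nu_def using meas_lin[OF that, of mu t "\<lambda>_. 1"] meas_one[OF that] by simp
  have "R n nu x k < C" if x: "x \<in> {1..n}" for x k
  proof (rule R_lt[OF nm x])
    have B1p: "0 \<le> real (card (pg_ball n x k))" by simp
    show "pg_meas nu (pg_ball n x (2 * k + 1)) < C * pg_meas nu (pg_ball n x k)"
    proof (cases "k = 0")
      case True
      have c0: "card (pg_ball n x 0) = 1" using x by (simp add: ball0)
      have cb: "card (pg_ball n x 1) \<le> 3" using card_B2_le[of x n 0] x c0 by simp
      have "t * real (card (pg_ball n x 1)) \<le> t * 3" using cb t0 by simp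
      moreover have "t * 3 < C * pg_meas mu (pg_ball n x 0) - pg_meas mu (pg_ball n x 1)"
        using ts x unfolding s_def by auto
      moreover have "0 \<le> C * t" using Cgt t0 by simp
      ultimately show ?thesis using True c0 by (simp add: nuA ball_fin algebra_simps)
    next
      case False
      have "R n mu x k \<le> C" unfolding C_def using x n1 by (intro R_le_C) auto
      then have a: "pg_meas mu (pg_ball n x (2*k+1)) \<le> C * pg_meas mu (pg_ball n x k)"
        using R_le_D[OF m x] by blast
      have "real (card (pg_ball n x (2*k+1))) < C * real (card (pg_ball n x k))"
        using x False Cgt by (intro card_strict) auto
      then have b: "t * real (card (pg_ball n x (2*k+1))) < t * (C * real (card (pg_ball n x k)))"
        using t0 by simp
      show ?thesis using a b by (simp add: nuA ball_fin algebra_simps)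
    qed
  qed
  then have "C_mu n nu < C" using n1 by (intro C_lt) auto
  moreover have "C_L n \<le> C_mu n nu" by (rule CL_le[OF n1 nm])
  ultimately show False using opt unfolding C_def by simp
qed



lemma refl_img: "1 \<le> l \<Longrightarrow> u \<le> (n::nat) \<Longrightarrow> (\<lambda>y. n+1-y) ` {l..u} = {n+1-u..n+1-l}"
proof (rule set_eqI, rule iffI)
  fix z assume "1 \<le> l" "u \<le> n" "z \<in> {n+1-u..n+1-l}"
  then have z1: "n+1-u \<le> z" "z \<le> n+1-l" "1 \<le> l" "u \<le> n" by auto
  have "z = n+1-(n+1-z)" using z1 by arith
  moreover have "l \<le> n+1-z" using z1 by arith
  moreover have "n+1-z \<le> u" using z1 by arith
  ultimately have "z = n+1-(n+1-z)" "n+1-z \<in> {l..u}" by auto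
  then show "z \<in> (\<lambda>y. n+1-y) ` {l..u}" by (rule image_eqI)
qed auto

lemma refl_ball: assumes "1 \<le> x" "x \<le> n"
  shows "pg_ball n (n+1-x) r = (\<lambda>y. n+1-y) ` pg_ball n x r"
proof -
  have e1: "pg_ball n (n+1-x) r = {max 1 (n+1-x - r) .. min n (n+1-x + r)}"
    using assms by (intro ball_ivl) auto
  have e2: "(\<lambda>y. n+1-y) ` pg_ball n x r = {n+1-min n (x + r) .. n+1-max 1 (x - r)}"
    unfolding ball_ivl[OF assms] by (rule refl_img) auto
  have e3: "n+1-min n (x + r) = max 1 (n+1-x - r)"
  proof (cases "x + r \<le> n")
    case True
    then have "min n (x+r) = x+r" "max 1 (n+1-x-r) = n+1-x-r" by auto
    then show ?thesis by simp
  next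
    case False
    then have "min n (x+r) = n" "n+1-x-r = 0" by auto
    then show ?thesis by simp
  qed
  have e4: "n+1-max 1 (x - r) = min n (n+1-x + r)"
  proof (cases "r < x")
    case True
    then have "max 1 (x-r) = x-r" "min n (n+1-x+r) = n+1-x+r" using assms by auto
    then show ?thesis using True assms by simp
  next
    case False
    then have "max 1 (x-r) = 1" "min n (n+1-x+r) = n" using assms by auto
    then show ?thesis by simp
  qed
  show ?thesis unfolding e1 e2 e3 e4 ..
qed

lemma meas_refl:
  assumes s: "pg_symmetric n mu" and A: "A \<subseteq> {1..n}"
  shows "pg_meas mu ((\<lambda>y. n+1-y) ` A) = pg_meas mu A"
proof -
  have inj: "inj_on (\<lambda>y. n+1-y) A"
  proof (rule inj_onI)
    fix x y assume "x \<in> A" "y \<in> A" "n+1-x = n+1-y"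
    moreover have "x \<le> n" "y \<le> n" using A \<open>x \<in> A\<close> \<open>y \<in> A\<close> by auto
    ultimately show "x = y" by arith
  qed
  have "pg_meas mu ((\<lambda>y. n+1-y) ` A) = (\<Sum>y\<in>A. mu (n+1-y))"
    using sum.reindex[OF inj, of mu] unfolding pg_meas_def by (simp add: comp_def)
  also have "\<dots> = pg_meas mu A" unfolding pg_meas_def
    using s A by (intro sum.cong) (auto simp: pg_symmetric_def)
  finally show ?thesis .
qed

lemma R_refl: assumes "pg_symmetric n mu" "1 \<le> x" "x \<le> n" shows "R n mu (n+1-x) k = R n mu x k"
proof -
  have "pg_meas mu (pg_ball n (n+1-x) r) = pg_meas mu (pg_ball n x r)" for r
    unfolding refl_ball[OF assms(2,3)] by (rule meas_refl[OF assms(1) ball_sub])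
  then show ?thesis unfolding R_def by simp
qed

lemma ball1_ivl: "1 \<le> n \<Longrightarrow> pg_ball n 1 r = {1..min n (r+1)}"
  by (simp add: ball_ivl)

lemma ball_z1: "2 \<le> z \<Longrightarrow> z < n \<Longrightarrow> pg_meas mu (pg_ball n z 1) = mu (z-1) + mu z + mu (z+1)"
proof -
  assume z: "2 \<le> z" "z < n"
  have "pg_ball n z 1 = {z-1, z, z+1}" using z by (auto simp: ball_ivl)
  moreover have "z - 1 \<noteq> z" "z - 1 \<noteq> z + 1" "z \<noteq> z + 1" using z by auto
  ultimately show ?thesis unfolding pg_meas_def by simp
qed

locale pgctx =
  fixes n :: nat and mu :: "nat \<Rightarrow> real" and C :: real
  assumes n3: "3 \<le> n" and m: "pg_is_measure n mu" and sy: "pg_symmetric n mu"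
    and CC: "C = C_mu n mu" and C3: "C \<le> 3"
begin

lemma n1: "1 \<le> n" using n3 by simp

lemma Cgt: "7/3 < C" unfolding CC by (rule C_gt[OF n3 m])

lemma pos: "y \<in> {1..n} \<Longrightarrow> 0 < mu y" using m unfolding pg_is_measure_def by auto

lemma RC: "x \<in> {1..n} \<Longrightarrow> pg_meas mu (pg_ball n x (2*k+1)) \<le> C * pg_meas mu (pg_ball n x k)"
  using R_le_D[OF m, of x k C] R_le_C[OF n1, of x mu k] CC by auto

lemma H0: "2 \<le> z \<Longrightarrow> z < n \<Longrightarrow> mu (z-1) + mu z + mu (z+1) \<le> C * mu z"
  using RC[of z 0] ball_z1[of z n mu] ball0[of z n] by simp

lemma symm: "y \<in> {1..n} \<Longrightarrow> mu (n+1-y) = mu y"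
  using sy unfolding pg_symmetric_def by auto

lemma desc_step: "2 \<le> z \<Longrightarrow> z < n \<Longrightarrow> mu z < mu (z-1) \<Longrightarrow> mu (z+1) < mu z"
proof -
  assume z: "2 \<le> z" "z < n" "mu z < mu (z-1)"
  have "C * mu z \<le> 3 * mu z" using C3 pos[of z] z by (intro mult_right_mono) auto
  then show ?thesis using H0[of z] z by linarith
qed

lemma desc_chain: "2 \<le> y \<Longrightarrow> mu y < mu (y-1) \<Longrightarrow> y + d \<le> n \<Longrightarrow> mu (y+d) < mu (y+d-1)"
proof (induction d)
  case 0 then show ?case by simp
next
  case (Suc d)
  then have "mu (y+d) < mu (y+d-1)" by simp
  then have "mu (y+d+1) < mu (y+d)" using Suc.prems by (intro desc_step) auto
  then show ?case by simp
qed

lemma desc_far: "2 \<le> y \<Longrightarrow> mu y < mu (y-1) \<Longrightarrow> y + d \<le> n \<Longrightarrow> mu (y+d) < mu (y-1)"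
proof (induction d)
  case 0 then show ?case by simp
next
  case (Suc d)
  then have "mu (y+d) < mu (y-1)" by simp
  moreover have "mu (y + Suc d) < mu (y + Suc d - 1)" using Suc.prems by (intro desc_chain) auto
  ultimately show ?case by simp
qed

lemma nondec: assumes y: "2 \<le> y" "2*y \<le> n+2" shows "mu (y-1) \<le> mu y"
proof (rule ccontr)
  assume "\<not> mu (y-1) \<le> mu y"
  then have d: "mu y < mu (y-1)" by simp
  have "mu (y + (n+2-2*y)) < mu (y-1)" using y n3 by (intro desc_far[OF _ d]) auto
  moreover have "y + (n+2-2*y) = n+1-(y-1)" using y by simp
  moreover have "mu (n+1-(y-1)) = mu (y-1)" using y n3 by (intro symm) auto
  ultimately show False by simp
qed

lemma mono_left: assumes i1: "1 \<le> i" shows "i \<le> j \<Longrightarrow> 2*j \<le> n+2 \<Longrightarrow> mu i \<le> mu j"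
proof (induction j rule: dec_induct)
  case base then show ?case by simp
next
  case (step j)
  then have "mu i \<le> mu j" by simp
  moreover have "mu (Suc j - 1) \<le> mu (Suc j)" using step i1 by (intro nondec) auto
  ultimately show ?case by simp
qed

lemma U: assumes "1 \<le> i" "i \<le> j" "i + j \<le> n+1" shows "mu i \<le> mu j"
proof (cases "2*j \<le> n+2")
  case True then show ?thesis using assms mono_left by auto
next
  case False
  have "mu i \<le> mu (n+1-j)" using assms False by (intro mono_left) auto
  also have "\<dots> = mu j" using assms by (intro symm) auto
  finally show ?thesis .
qed

lemma meas_union_le: "finite A \<Longrightarrow> finite B \<Longrightarrow> A \<union> B \<subseteq> {1..n} \<Longrightarrow>
   pg_meas mu (A \<union> B) \<le> pg_meas mu A + pg_meas mu B"
proof -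
  assume f: "finite A" "finite B" and s: "A \<union> B \<subseteq> {1..n}"
  have "pg_meas mu (A \<union> B) + pg_meas mu (A \<inter> B) = pg_meas mu A + pg_meas mu B"
    unfolding pg_meas_def using f by (rule sum.union_inter)
  moreover have "0 \<le> pg_meas mu (A \<inter> B)" using s by (intro meas_nonneg[OF m]) auto
  ultimately show ?thesis by linarith
qed

lemma sum_top: "2 \<le> b \<Longrightarrow> pg_meas mu {1..b} = pg_meas mu {1..b-2} + mu (b-1) + mu b"
proof -
  assume b: "2 \<le> b"
  then obtain c where c: "b = Suc (Suc c)" by (metis add_2_eq_Suc le_Suc_ex)
  show ?thesis unfolding pg_meas_def c by (simp add: sum.cl_ivl_Suc)
qed

lemma sum_top1: "1 \<le> b \<Longrightarrow> pg_meas mu {1..b} = pg_meas mu {1..b-1} + mu b"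
proof -
  assume b: "1 \<le> b"
  then obtain c where c: "b = Suc c" by (cases b) auto
  show ?thesis unfolding pg_meas_def c by (simp add: sum.cl_ivl_Suc)
qed

lemma L: assumes a: "n+1 \<le> 3*a" "a < n"
  shows "pg_meas mu {1..min n (2*a)} < C * pg_meas mu {1..a}"
proof (cases "n \<le> 2*a")
  case True
  have b1: "pg_ball n 1 (a-1) = {1..a}" using a n3 by (simp add: ball_ivl)
  have bn: "pg_ball n n (a-1) = {n+1-a..n}" using a n3 by (auto simp: ball_ivl max_def)
  have "pg_meas mu {n+1-a..n} = pg_meas mu {1..a}"
    using refl_ball[of 1 n "a-1"] n3 b1 bn meas_refl[OF sy, of "{1..a}"] a by simp
  moreover have "pg_meas mu {1..n} \<le> pg_meas mu {1..a} + pg_meas mu {n+1-a..n}"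
  proof -
    have "{1..n} = {1..a} \<union> {n+1-a..n}" using True a by auto
    then show ?thesis using meas_union_le[of "{1..a}" "{n+1-a..n}"] a by auto
  qed
  moreover have "0 < pg_meas mu {1..a}" using a n3 by (intro meas_pos[OF m]) auto
  moreover have "min n (2*a) = n" using True by simp
  moreover have "2 * pg_meas mu {1..a} < C * pg_meas mu {1..a}"
    using Cgt \<open>0 < pg_meas mu {1..a}\<close> by (intro mult_strict_right_mono) auto
  ultimately show ?thesis by linarith
next
  case False
  have a2: "2 \<le> a" using a n3 by simp
  have mn: "min n (2*a) = 2*a" using False by simp
  have e1: "pg_meas mu {1..2*a} = pg_meas mu {1..2*a-2} + mu (2*a-1) + mu (2*a)"
    using a2 by (intro sum_top) auto
  have "pg_meas mu (pg_ball n 1 (2*(a-2)+1)) \<le> C * pg_meas mu (pg_ball n 1 (a-2))"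
    using n3 by (intro RC) auto
  moreover have "pg_ball n 1 (2*(a-2)+1) = {1..2*a-2}" using a2 False n3 by (simp add: ball_ivl)
  moreover have "pg_ball n 1 (a-2) = {1..a-1}" using a2 a n3 by (simp add: ball_ivl)
  ultimately have e2: "pg_meas mu {1..2*a-2} \<le> C * pg_meas mu {1..a-1}" by simp
  have e3: "pg_meas mu {1..a} = pg_meas mu {1..a-1} + mu a" using a2 by (intro sum_top1) auto
  have e4: "mu (a-1) + mu a + mu (a+1) \<le> C * mu a" using a2 a by (intro H0) auto
  have e5: "mu (2*a) \<le> mu a"
  proof -
    have "mu (n+1-(2*a)) \<le> mu a" using a False by (intro U) auto
    moreover have "mu (n+1-(2*a)) = mu (2*a)" using a2 False by (intro symm) auto
    ultimately show ?thesis by simp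
  qed
  have e6: "mu (2*a-1) \<le> mu (a+1)"
  proof -
    have "mu (n+1-(2*a-1)) \<le> mu (a+1)" using a False a2 by (intro U) auto
    moreover have "mu (n+1-(2*a-1)) = mu (2*a-1)" using a2 False by (intro symm) auto
    ultimately show ?thesis by simp
  qed
  have e7: "0 < mu (a-1)" using a2 a by (intro pos) auto
  show ?thesis unfolding mn using e1 e2 e3 e4 e5 e6 e7 by (simp add: algebra_simps)
qed

end



lemma ceil_bound:
  assumes "\<not> (a - 1 < nat \<lceil>(real n - 2) / 3\<rceil>)" "1 \<le> a"
  shows "n + 1 \<le> 3 * a"
proof -
  have "\<lceil>(real n - 2) / 3\<rceil> \<le> int (a - 1)" using assms by linarith
  then have "(real n - 2) / 3 \<le> real (a - 1)" by (simp add: ceiling_le_iff)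
  then have "real n - 2 \<le> 3 * real (a - 1)" by simp
  then have "real n + 1 \<le> 3 * real a" using assms(2) by (simp add: of_nat_diff)
  then show ?thesis by linarith
qed

context pgctx
begin

lemma endpoint1:
  assumes hyp: "\<And>k. k < nat \<lceil>(real n - 2) / 3\<rceil> \<Longrightarrow> R n mu 1 k < C"
    and x: "x \<in> {1..n}" and one: "1 \<in> pg_ball n x k"
  shows "R n mu x k < C"
proof -
  have xk: "x \<le> k + 1" using one unfolding pg_ball_def by auto
  show ?thesis
  proof (cases "n \<le> x + k")
    case True
    have "pg_ball n x k = {1..n}" "pg_ball n x (2*k+1) = {1..n}"
      using True xk x by (auto simp: ball_ivl max_def min_def)
    moreover have "0 < pg_meas mu {1..n}" using n3 by (intro meas_pos[OF m]) auto
    ultimately show ?thesis unfolding R_def using Cgt by simp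
  next
    case False
    define a where "a = x + k"
    have a1: "1 \<le> a" "a < n" using x False unfolding a_def by auto
    have B1: "pg_ball n x k = {1..a}" using xk x False unfolding a_def by (auto simp: ball_ivl max_def min_def)
    have B2: "pg_ball n x (2*k+1) \<subseteq> {1..min n (2*a)}" using xk x unfolding a_def by (auto simp: ball_ivl max_def min_def)
    have c1: "pg_ball n 1 (a-1) = {1..a}" using a1 by (simp add: ball_ivl)
    have c2: "pg_ball n 1 (2*(a-1)+1) = {1..min n (2*a)}" using a1 by (simp add: ball_ivl)
    have key: "pg_meas mu {1..min n (2*a)} < C * pg_meas mu {1..a}"
    proof (cases "a - 1 < nat \<lceil>(real n - 2) / 3\<rceil>")
      case True
      then have "R n mu 1 (a-1) < C" by (rule hyp)
      then show ?thesis using R_lt_D[OF m, of 1 "a-1" C] n3 c1 c2 by auto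
    next
      case False
      then have "n + 1 \<le> 3 * a" using a1 by (intro ceil_bound) auto
      then show ?thesis using a1 by (intro L) auto
    qed
    have "pg_meas mu (pg_ball n x (2*k+1)) \<le> pg_meas mu {1..min n (2*a)}"
      using B2 by (intro meas_mono[OF m]) auto
    then have "pg_meas mu (pg_ball n x (2*k+1)) < C * pg_meas mu (pg_ball n x k)"
      using key B1 by simp
    then show ?thesis by (rule R_lt[OF m x])
  qed
qed

lemma endpoint:
  assumes hyp: "\<And>k. k < nat \<lceil>(real n - 2) / 3\<rceil> \<Longrightarrow> R n mu 1 k < C"
    and x: "x \<in> {1..n}" and one: "1 \<in> pg_ball n x k \<or> n \<in> pg_ball n x k"
  shows "R n mu x k < C"
proof (cases "1 \<in> pg_ball n x k")
  case True show ?thesis using endpoint1[OF hyp x True] .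
next
  case False
  then have nn: "n \<in> pg_ball n x k" using one by simp
  have x': "n+1-x \<in> {1..n}" using x by auto
  have "pg_ball n (n+1-x) k = (\<lambda>y. n+1-y) ` pg_ball n x k" using x by (intro refl_ball) auto
  moreover have "1 = n+1-n" by simp
  ultimately have "1 \<in> pg_ball n (n+1-x) k" using nn by (metis image_eqI)
  then have "R n mu (n+1-x) k < C" using endpoint1[OF hyp x'] by blast
  then show ?thesis using R_refl[OF sy, of x k] x by simp
qed

end

definition ww :: "nat \<Rightarrow> nat \<Rightarrow> real" where
  "ww n y = (1/4)^y + (1/4)^(n+1-y)"

lemma geo: "l \<le> Suc u \<Longrightarrow> (\<Sum>y\<in>{l..u}. (1/4::real)^y) = 4/3*((1/4)^l - (1/4)^(Suc u))"
proof (induction u)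
  case 0
  then show ?case by (cases l) auto
next
  case (Suc u)
  show ?case
  proof (cases "l \<le> Suc u")
    case True
    then have "(\<Sum>y\<in>{l..Suc u}. (1/4::real)^y) = (\<Sum>y\<in>{l..u}. (1/4::real)^y) + (1/4)^(Suc u)"
      by (simp add: sum.cl_ivl_Suc)
    then show ?thesis using Suc True by simp
  next
    case False
    then have "l = Suc (Suc u)" using Suc.prems by simp
    then show ?thesis by simp
  qed
qed

lemma geo_le: "(\<Sum>y\<in>{l..u}. (1/4::real)^y) \<le> 4/3*(1/4)^l"
proof (cases "l \<le> Suc u")
  case True then show ?thesis by (simp add: geo)
next
  case False then have "{l..u} = {}" by auto
  then show ?thesis by simp
qed

lemma geo_refl: assumes "1 \<le> l" "u \<le> n"
  shows "(\<Sum>y\<in>{l..u}. (1/4::real)^(n+1-y)) \<le> 4/3*(1/4)^(n+1-u)"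
proof -
  have inj: "inj_on (\<lambda>y. n+1-y) {l..u}" using assms by (auto simp: inj_on_def)
  have "(\<Sum>y\<in>{l..u}. (1/4::real)^(n+1-y)) = (\<Sum>y\<in>(\<lambda>y. n+1-y) ` {l..u}. (1/4::real)^y)"
    using sum.reindex[OF inj, of "\<lambda>y. (1/4::real)^y"] by (simp add: comp_def)
  also have "\<dots> = (\<Sum>y\<in>{n+1-u..n+1-l}. (1/4::real)^y)" using refl_img[OF assms] by simp
  also have "\<dots> \<le> 4/3*(1/4)^(n+1-u)" by (rule geo_le)
  finally show ?thesis .
qed

lemma ww_pos: "0 < ww n y" unfolding ww_def by (simp add: add_pos_pos)

lemma ww_meas: "pg_is_measure n (ww n)" unfolding pg_is_measure_def using ww_pos by auto

lemma ww_le2: "ww n y \<le> 2"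
proof -
  have "(1/4::real)^y \<le> 1" "(1/4::real)^(n+1-y) \<le> 1" by (auto intro: power_le_one)
  then show ?thesis unfolding ww_def by simp
qed

lemma ww_ineq:
  assumes x: "x \<in> {1..n}" and no1: "1 \<notin> pg_ball n x k" and non: "n \<notin> pg_ball n x k"
  shows "3 * pg_meas (ww n) (pg_ball n x k) < pg_meas (ww n) (pg_ball n x (2*k+1))"
proof -
  define l where "l = x - k"
  define u where "u = x + k"
  have xk: "k + 2 \<le> x" using no1 x unfolding pg_ball_def by auto
  have xn: "x + k < n" using non x unfolding pg_ball_def by auto
  have l2: "2 \<le> l" "l \<le> u" "u < n" using xk xn unfolding l_def u_def by auto
  have B1: "pg_ball n x k = {l..u}" using x xk xn unfolding l_def u_def by (auto simp: ball_ivl max_def min_def)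
  have B2: "{l-1..u+1} \<subseteq> pg_ball n x (2*k+1)" using x xk xn unfolding l_def u_def by (auto simp: ball_ivl)
  have split: "pg_meas (ww n) {l-1..u+1} = ww n (l-1) + pg_meas (ww n) {l..u} + ww n (u+1)"
  proof -
    have "{l-1..u+1} = insert (l-1) (insert (u+1) {l..u})" using l2 by auto
    moreover have "l - 1 \<notin> insert (u+1) {l..u}" "u + 1 \<notin> {l..u}" using l2 by auto
    ultimately show ?thesis unfolding pg_meas_def by simp
  qed
  have "pg_meas (ww n) {l..u} = (\<Sum>y\<in>{l..u}. (1/4::real)^y) + (\<Sum>y\<in>{l..u}. (1/4::real)^(n+1-y))"
    unfolding pg_meas_def ww_def by (simp add: sum.distrib)
  also have "\<dots> \<le> 4/3*(1/4)^l + 4/3*(1/4)^(n+1-u)"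
    using geo_le[of l u] geo_refl[of l u n] l2 by simp
  also have "\<dots> = 1/3 * ((1/4)^(l-1) + (1/4)^(n+1-(u+1)))"
  proof -
    obtain j where j: "l = Suc j" using l2 by (cases l) auto
    have "(1/4::real)^(l-1) = 4 * (1/4)^l" unfolding j by simp
    moreover obtain i where i: "n + 1 - u = Suc i" "n+1-(u+1) = i" using l2 by (intro that[of "n-u"]) auto
    moreover have "(1/4::real)^(n+1-(u+1)) = 4 * (1/4)^(n+1-u)" unfolding i by simp
    ultimately show ?thesis by simp
  qed
  also have "\<dots> \<le> 1/3 * (ww n (l-1) + ww n (u+1))" unfolding ww_def by simp
  finally have S: "3 * pg_meas (ww n) {l..u} \<le> ww n (l-1) + ww n (u+1)" by simp
  have Sp: "0 < pg_meas (ww n) {l..u}" using l2 by (intro meas_pos[OF ww_meas[of n]]) auto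
  have "pg_meas (ww n) {l-1..u+1} \<le> pg_meas (ww n) (pg_ball n x (2*k+1))"
    using B2 by (intro meas_mono[OF ww_meas[of n]] ball_sub) auto
  then show ?thesis using split S Sp B1 by simp
qed



lemma K_pos: "3 \<le> n \<Longrightarrow> 1 \<le> nat \<lceil>(real n - 2) / 3\<rceil>"
proof -
  assume "3 \<le> n"
  then have "0 < (real n - 2) / 3" by simp
  then have "0 < \<lceil>(real n - 2) / 3\<rceil>" by simp
  then show ?thesis by linarith
qed

lemma M1_set: "{pg_meas mu (pg_ball n 1 (2*k+1)) / pg_meas mu (pg_ball n 1 k) | k. k < K}
   = (\<lambda>k. R n mu 1 k) ` {..<K}"
  unfolding R_def by auto

theorem partB:
  assumes n: "3 \<le> n" and m: "pg_is_measure n mu" and sy: "pg_symmetric n mu"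
    and opt: "C_mu n mu = C_L n"
  shows "M1 n mu = C_mu n mu"
proof -
  define C where "C = C_mu n mu"
  have n1: "1 \<le> n" using n by simp
  have C3: "C \<le> 3" unfolding C_def opt using CL_le3[OF n1] .
  interpret pgctx n mu C using n m sy C3 unfolding C_def by unfold_locales auto
  define K where "K = nat \<lceil>(real n - 2) / 3\<rceil>"
  have K1: "1 \<le> K" unfolding K_def by (rule K_pos[OF n])
  have "0 \<in> {..<K}" using K1 by simp
  then have Kne: "{..<K} \<noteq> {}" by blast
  have M1eq: "M1 n mu = Max ((\<lambda>k. R n mu 1 k) ` {..<K})"
    unfolding M1_def K_def[symmetric] M1_set using Kne by (intro cSup_eq_Max) auto
  have M1le: "M1 n mu \<le> C"
    unfolding M1eq C_def using Kne n1 by (subst Max_le_iff) (auto intro: R_le_C)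
  show ?thesis
  proof (rule ccontr)
    assume "M1 n mu \<noteq> C_mu n mu"
    then have M1lt: "M1 n mu < C" using M1le unfolding C_def by simp
    have hyp: "R n mu 1 k < C" if "k < nat \<lceil>(real n - 2) / 3\<rceil>" for k
    proof -
      have "R n mu 1 k \<le> M1 n mu" unfolding M1eq using that unfolding K_def by (intro Max_ge) auto
      then show ?thesis using M1lt by simp
    qed
    define w where "w = ww n"
    define W where "W = pg_meas w {1..n}"
    have W0: "0 \<le> W" unfolding W_def w_def by (rule meas_nonneg[OF ww_meas]) simp
    have C0: "0 < C" using Cgt by simp
    define isE where "isE x k \<longleftrightarrow> (1 \<in> pg_ball n x k \<or> n \<in> pg_ball n x k)" for x k
    define s where "s p = (if isE (fst p) (snd p) then
        (C * pg_meas mu (pg_ball n (fst p) (snd p)) - pg_meas mu (pg_ball n (fst p) (2*snd p+1))) / (C*W+1)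
        else 1)" for p
    have sp: "\<forall>p\<in>{1..n} \<times> {..n}. 0 < s p"
    proof
      fix p assume p: "p \<in> {1..n} \<times> {..n}"
      obtain x k where xk: "p = (x,k)" by (cases p)
      have x: "x \<in> {1..n}" using p xk by auto
      show "0 < s p"
      proof (cases "isE x k")
        case True
        then have "R n mu x k < C" unfolding isE_def by (intro endpoint[OF hyp x]) auto
        then have "pg_meas mu (pg_ball n x (2*k+1)) < C * pg_meas mu (pg_ball n x k)"
          by (rule R_lt_D[OF m x])
        moreover have "0 < C*W+1" using mult_nonneg_nonneg[of C W] C0 W0 by linarith
        ultimately show ?thesis unfolding s_def xk using True by simp
      next
        case False then show ?thesis unfolding s_def xk by simp
      qed
    qed
    obtain t1 where t1: "0 < t1" "\<forall>p\<in>{1..n} \<times> {..n}. t1 < s p"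
      using small_t[OF _ sp] by auto
    have sp2: "\<forall>y\<in>{1..n}. 0 < mu y / 2" using pos by auto
    obtain t2 where t2: "0 < t2" "\<forall>y\<in>{1..n}. t2 < mu y / 2"
      using small_t[OF _ sp2] by auto
    define t where "t = min t1 t2"
    have t0: "0 < t" "t \<le> t1" "t \<le> t2" using t1 t2 unfolding t_def by auto
    define nu where "nu v = mu v + (- t) * w v" for v
    have nuA: "pg_meas nu A = pg_meas mu A - t * pg_meas w A" if "finite A" for A
      unfolding nu_def using meas_lin[OF that, of mu "-t" w] by simp
    have nm: "pg_is_measure n nu" unfolding pg_is_measure_def
    proof
      fix y assume y: "y \<in> {1..n}"
      have "t * w y \<le> t * 2" using t0 ww_le2[of n y] unfolding w_def by (intro mult_left_mono) auto
      moreover have "t2 < mu y / 2" using t2 y by blast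
      then have "t * 2 < mu y" using t0 by linarith
      ultimately show "0 < nu y" unfolding nu_def by simp
    qed
    have "R n nu x k < C" if x: "x \<in> {1..n}" and kn: "k \<le> n" for x k
    proof (rule R_lt[OF nm x])
      define A1 where "A1 = pg_meas mu (pg_ball n x k)"
      define A2 where "A2 = pg_meas mu (pg_ball n x (2*k+1))"
      define w1 where "w1 = pg_meas w (pg_ball n x k)"
      define w2 where "w2 = pg_meas w (pg_ball n x (2*k+1))"
      have w1: "0 \<le> w1" unfolding w1_def w_def by (rule meas_nonneg[OF ww_meas ball_sub])
      have w2: "0 \<le> w2" unfolding w2_def w_def by (rule meas_nonneg[OF ww_meas ball_sub])
      have "A2 - t * w2 < C * (A1 - t * w1)"
      proof (cases "isE x k")
        case True
        have "t < s (x,k)" using t1 t0 x kn by force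
        then have "t < (C * A1 - A2) / (C*W+1)" unfolding s_def A1_def A2_def using True by simp
        moreover have "0 < C*W+1" using mult_nonneg_nonneg[of C W] C0 W0 by linarith
        ultimately have a: "t * (C*W+1) < C * A1 - A2" by (simp add: pos_less_divide_eq)
        have "w1 \<le> W" unfolding w1_def W_def w_def by (rule meas_mono[OF ww_meas ball_sub]) simp
        then have "C * t * w1 \<le> C * t * W" using C0 t0 by (intro mult_left_mono) auto
        moreover have "C * t * W + t < C * A1 - A2" using a by (simp add: algebra_simps)
        moreover have "0 \<le> t * w2" using t0 w2 by simp
        moreover have "C * (A1 - t * w1) = C * A1 - C * t * w1" by (simp add: algebra_simps)
        ultimately show ?thesis using t0 by linarith
      next
        case False
        then have "3 * w1 < w2" unfolding isE_def w1_def w2_def w_def by (intro ww_ineq x) auto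
        moreover have "C * w1 \<le> 3 * w1" using C3 w1 by (intro mult_right_mono) auto
        ultimately have "t * (C * w1) < t * w2" using t0 by simp
        moreover have "A2 \<le> C * A1" unfolding A1_def A2_def using x by (rule RC)
        ultimately show ?thesis by (simp add: algebra_simps)
      qed
      then show "pg_meas nu (pg_ball n x (2 * k + 1)) < C * pg_meas nu (pg_ball n x k)"
        unfolding A1_def A2_def w1_def w2_def by (simp add: nuA ball_fin)
    qed
    then have "C_mu n nu < C" using n1 by (intro C_lt) auto
    moreover have "C_L n \<le> C_mu n nu" by (rule CL_le[OF n1 nm])
    ultimately show False using opt unfolding C_def by simp
  qed
qed

theorem proposition6p4:
  fixes n :: nat and mu :: "nat \<Rightarrow> real"
  assumes "n \<ge> 3"
    and "pg_is_measure n mu"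
    and "pg_symmetric n mu"
    and "C_mu n mu = C_L n"
  shows "M1 n mu = C0_mu n mu \<and> C0_mu n mu = C_L n"
  using partA[OF assms(1,2,4)] partB[OF assms] assms(4) by simp


end
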